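(* Let $\mathcal{M}=(E_t,\mathcal{T})$ be a simple oriented matroid, let $k$ be an integer with $1\le k\le|\mathcal{T}|/2$, and put $h=\lfloor(|\mathcal{T}|-k+1)/2\rfloor$ and $\mathcal{P}=\bigcup_{e\in E_t}\binom{\mathcal{T}^+_e}{h}$. For a family $\mathcal{G}\subseteq\mathcal{P}$ write $U_{\mathcal{G}}=\bigcup_{G\in\mathcal{G}}G$. Then \[ \mathring{\kappa}^{\ast}_k(\mathcal{M})=\binom{|\mathcal{T}|/2}{k}2^k+\sum_{\substack{\mathcal{G}\subseteq\mathcal{P}:\\ 1\le\#\mathcal{G}\le\binom{|\mathcal{T}|-k}{h},\\ |U_{\mathcal{G}}|\le|\mathcal{T}|-k}}(-1)^{\#\mathcal{G}}\sum_{j=0}^{k}\binom{|U_{\mathcal{G}}\cup -U_{\mathcal{G}}|-|U_{\mathcal{G}}|}{j}\binom{\tfrac12\bigl(|\mathcal{T}|-|U_{\mathcal{G}}\cup-U_{\mathcal{G}}|\bigr)}{k-j}2^{k-j}. \]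
   Context: Let $t\ge 1$ and $E_t=\{1,\dots,t\}$. $\mathcal{M}=(E_t,\mathcal{T})$ is a simple oriented matroid (no loops, parallel or antiparallel elements) with set of topes $\mathcal{T}\subseteq\{+,-\}^{E_t}$, closed under negation (so $|\mathcal{T}|$ is even). For $e\in E_t$, the positive halfspace is $\mathcal{T}^+_e=\{T\in\mathcal{T}: T(e)=+\}$. For $G\subseteq\mathcal{T}$, $-G=\{-T:T\in G\}$. For a set $X$, $\binom{X}{j}$ denotes the family of $j$-element subsets of $X$. A tope committee for $\mathcal{M}$ is a subset $\mathcal{K}^{\ast}\subset\mathcal{T}$ with $|\{T\in\mathcal{K}^{\ast}: T(e)=+\}|>\tfrac12|\mathcal{K}^{\ast}|$ for every $e\in E_t$. $\mathring{\kappa}^{\ast}_k(\mathcal{M})$ is the number of tope committees of cardinality $k$ containing no pair of opposite topes $\{T,-T\}$. Binomial coefficients $\binom{n}{j}$ are $0$ when $j>n$ or $j<0$. *)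

theory Defs
  imports Main
begin

text \<open>Sign vectors on the ground set E are functions nat => int with values in
{-1,0,1} that vanish outside E (+ = 1, - = -1, 0 = 0).
Oriented matroids are given by the covector axioms (V0)-(V3).\<close>

definition sign_vector :: "nat set \<Rightarrow> (nat \<Rightarrow> int) \<Rightarrow> bool" where
  "sign_vector E X \<longleftrightarrow> (\<forall>e. X e \<in> {-1,0,1}) \<and> (\<forall>e. e \<notin> E \<longrightarrow> X e = 0)"

definition sv_neg :: "(nat \<Rightarrow> int) \<Rightarrow> (nat \<Rightarrow> int)" where
  "sv_neg X = (\<lambda>e. - X e)"

definition sv_comp :: "(nat \<Rightarrow> int) \<Rightarrow> (nat \<Rightarrow> int) \<Rightarrow> (nat \<Rightarrow> int)" where
  "sv_comp X Y = (\<lambda>e. if X e \<noteq> 0 then X e else Y e)"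

definition sv_sep :: "(nat \<Rightarrow> int) \<Rightarrow> (nat \<Rightarrow> int) \<Rightarrow> nat set" where
  "sv_sep X Y = {e. X e \<noteq> 0 \<and> Y e = - X e}"

definition oriented_matroid_covectors :: "nat set \<Rightarrow> (nat \<Rightarrow> int) set \<Rightarrow> bool" where
  "oriented_matroid_covectors E L \<longleftrightarrow>
     (\<forall>X\<in>L. sign_vector E X) \<and>
     (\<lambda>_. 0) \<in> L \<and>
     (\<forall>X\<in>L. sv_neg X \<in> L) \<and>
     (\<forall>X\<in>L. \<forall>Y\<in>L. sv_comp X Y \<in> L) \<and>
     (\<forall>X\<in>L. \<forall>Y\<in>L. \<forall>e\<in>sv_sep X Y. \<exists>Z\<in>L. Z e = 0 \<and>
         (\<forall>f\<in>E. f \<notin> sv_sep X Y \<longrightarrow> Z f = sv_comp X Y f))"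

definition simple_om :: "nat set \<Rightarrow> (nat \<Rightarrow> int) set \<Rightarrow> bool" where
  "simple_om E L \<longleftrightarrow> oriented_matroid_covectors E L \<and>
     (\<forall>e\<in>E. \<exists>X\<in>L. X e \<noteq> 0) \<and>
     (\<forall>e\<in>E. \<forall>f\<in>E. e \<noteq> f \<longrightarrow>
        \<not> (\<forall>X\<in>L. X e = X f) \<and> \<not> (\<forall>X\<in>L. X e = - X f))"

text \<open>Topes: the maximal covectors; for a loopless oriented matroid these are
exactly the covectors with full support E.\<close>
definition topes :: "nat set \<Rightarrow> (nat \<Rightarrow> int) set \<Rightarrow> (nat \<Rightarrow> int) set" where
  "topes E L = {X\<in>L. \<forall>e\<in>E. X e \<noteq> 0}"

definition pos_halfspace :: "(nat \<Rightarrow> int) set \<Rightarrow> nat \<Rightarrow> (nat \<Rightarrow> int) set" where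
  "pos_halfspace T e = {X\<in>T. X e = 1}"

definition tope_committee :: "nat set \<Rightarrow> (nat \<Rightarrow> int) set \<Rightarrow> (nat \<Rightarrow> int) set \<Rightarrow> bool" where
  "tope_committee E T K \<longleftrightarrow> K \<subset> T \<and>
     (\<forall>e\<in>E. 2 * card {X\<in>K. X e = 1} > card K)"

definition kappa_ring :: "nat set \<Rightarrow> (nat \<Rightarrow> int) set \<Rightarrow> nat \<Rightarrow> nat" where
  "kappa_ring E L k = card {K. tope_committee E (topes E L) K \<and> card K = k \<and>
      (\<forall>X\<in>K. sv_neg X \<notin> K)}"

end

theory Submission
  imports Defs
begin

definition AF :: "('a \<Rightarrow> 'a) \<Rightarrow> 'a set \<Rightarrow> nat \<Rightarrow> 'a set set" where
  "AF f S m = {K. K \<subseteq> S \<and> card K = m \<and> (\<forall>x\<in>K. f x \<notin> K)}"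

lemma AF_finite: "finite S \<Longrightarrow> finite (AF f S m)"
  unfolding AF_def by (rule finite_subset[of _ "Pow S"]) auto

lemma AF_pairs:
  assumes fin: "finite R" and disj: "R \<inter> f ` R = {}" and inv: "\<forall>x\<in>R. f (f x) = x"
  shows "card (AF f (R \<union> f ` R) m) = (card R choose m) * 2^m"
proof -
  have injR: "inj_on f R" using inv by (metis inj_onI)
  define g where "g = (\<lambda>(M,D). (M - D) \<union> f ` D)"
  define Sg where "Sg = Sigma {M. M \<subseteq> R \<and> card M = m} Pow"
  have cardSg: "card Sg = (card R choose m) * 2^m"
  proof -
    have "card Sg = (\<Sum>M\<in>{M. M \<subseteq> R \<and> card M = m}. card (Pow M))"
      unfolding Sg_def by (rule card_SigmaI) (auto intro: finite_subset[OF _ fin] finite_subset[of _ "Pow R"] simp: fin)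
    also have "\<dots> = (\<Sum>M\<in>{M. M \<subseteq> R \<and> card M = m}. 2^m)"
      by (rule sum.cong) (auto simp: card_Pow dest: finite_subset[OF _ fin])
    also have "\<dots> = (card R choose m) * 2^m" using n_subsets[OF fin] by simp
    finally show ?thesis .
  qed
  have gD: "D = {r\<in>R. f r \<in> g (M,D)}" if "M \<subseteq> R" "D \<subseteq> M" for M D
  proof -
    have "f r \<in> g (M,D) \<longleftrightarrow> r \<in> D" if "r \<in> R" for r
    proof
      assume "f r \<in> g (M,D)"
      then consider "f r \<in> M - D" | "f r \<in> f ` D" unfolding g_def by auto
      then show "r \<in> D"
      proof cases
        case 1 then show ?thesis using disj \<open>r\<in>R\<close> \<open>M \<subseteq> R\<close> by blast
      next
        case 2 then obtain d where "d \<in> D" "f r = f d" by auto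
        then show ?thesis using injR \<open>r\<in>R\<close> \<open>D\<subseteq>M\<close> \<open>M\<subseteq>R\<close> by (metis inj_onD subsetD)
      qed
    qed (auto simp: g_def)
    then show ?thesis using that by auto
  qed
  have gM: "M = {r\<in>R. r \<in> g (M,D) \<or> f r \<in> g (M,D)}" if "M \<subseteq> R" "D \<subseteq> M" for M D
  proof -
    have "r \<in> g (M,D) \<longleftrightarrow> r \<in> M - D" if "r \<in> R" for r
      using that disj \<open>D \<subseteq> M\<close> \<open>M \<subseteq> R\<close> unfolding g_def by blast
    then show ?thesis using gD[OF that] that by auto
  qed
  have gcard: "card (g (M,D)) = card M" if "M \<subseteq> R" "D \<subseteq> M" for M D
  proof -
    have fM: "finite M" using that fin finite_subset by blast
    have "card (g (M,D)) = card (M - D) + card (f ` D)"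
      unfolding g_def split
      by (rule card_Un_disjoint) (use that fM disj in \<open>auto intro: finite_subset\<close>)
    also have "card (f ` D) = card D"
      by (rule card_image) (use that injR in \<open>auto intro: inj_on_subset\<close>)
    also have "card (M - D) + card D = card M"
      using that fM by (metis card_Diff_subset card_mono finite_subset le_add_diff_inverse2)
    finally show ?thesis .
  qed
  have inj: "inj_on g Sg"
  proof (rule inj_onI)
    fix x y assume "x \<in> Sg" "y \<in> Sg" "g x = g y"
    then obtain M D M' D' where x: "x = (M,D)" "M \<subseteq> R" "D \<subseteq> M" and y: "y = (M',D')" "M' \<subseteq> R" "D' \<subseteq> M'"
      unfolding Sg_def by auto
    show "x = y"
      using gD[OF x(2,3)] gD[OF y(2,3)] gM[OF x(2,3)] gM[OF y(2,3)] \<open>g x = g y\<close> x y by simp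
  qed
  have img: "g ` Sg = AF f (R \<union> f ` R) m"
  proof
    show "g ` Sg \<subseteq> AF f (R \<union> f ` R) m"
    proof
      fix K assume "K \<in> g ` Sg"
      then obtain M D where K: "K = g (M,D)" "M \<subseteq> R" "D \<subseteq> M" "card M = m"
        unfolding Sg_def by auto
      have "K \<subseteq> R \<union> f ` R" using K unfolding g_def by auto
      moreover have "card K = m" using gcard[OF K(2,3)] K by simp
      moreover have "\<forall>x\<in>K. f x \<notin> K"
      proof
        fix x assume "x \<in> K"
        then consider "x \<in> M - D" | "x \<in> f ` D" using K unfolding g_def by auto
        then show "f x \<notin> K"
        proof cases
          case 1
          then have "x \<in> R" "x \<notin> D" using K by auto
          then show ?thesis using gD[OF K(2,3)] K(1) by auto
        next
          case 2
          then obtain d where d: "d \<in> D" "x = f d" by auto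
          then have "f x = d" "d \<in> R" using inv K by auto
          then show ?thesis using d disj K unfolding g_def by auto
        qed
      qed
      ultimately show "K \<in> AF f (R \<union> f ` R) m" unfolding AF_def by auto
    qed
  next
    show "AF f (R \<union> f ` R) m \<subseteq> g ` Sg"
    proof
      fix K assume "K \<in> AF f (R \<union> f ` R) m"
      then have K: "K \<subseteq> R \<union> f ` R" "card K = m" "\<forall>x\<in>K. f x \<notin> K" unfolding AF_def by auto
      define M where "M = {r\<in>R. r \<in> K \<or> f r \<in> K}"
      define D where "D = {r\<in>R. f r \<in> K}"
      have MD: "M \<subseteq> R" "D \<subseteq> M" unfolding M_def D_def by auto
      have "g (M,D) = K"
      proof
        show "g (M,D) \<subseteq> K" unfolding g_def M_def D_def by auto
        show "K \<subseteq> g (M,D)"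
        proof
          fix x assume "x \<in> K"
          then consider "x \<in> R" | r where "r \<in> R" "x = f r" using K by auto
          then show "x \<in> g (M,D)"
          proof cases
            case 1
            then have "x \<notin> D" using K \<open>x\<in>K\<close> unfolding D_def by auto
            then show ?thesis using 1 \<open>x\<in>K\<close> unfolding g_def M_def by auto
          next
            case 2
            then have "r \<in> D" using \<open>x\<in>K\<close> unfolding D_def by auto
            then show ?thesis using 2 unfolding g_def by auto
          qed
        qed
      qed
      moreover have "card M = m" using gcard[OF MD] \<open>g (M,D) = K\<close> K by simp
      ultimately show "K \<in> g ` Sg" using MD unfolding Sg_def by force
    qed
  qed
  show ?thesis using card_image[OF inj] img cardSg by simp
qed

lemma AF_split:
  assumes f1: "finite S1" and f2: "finite S2" and dj: "S1 \<inter> S2 = {}"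
    and h1: "\<forall>x\<in>S1. f x \<notin> S1 \<union> S2" and h2: "\<forall>x\<in>S2. f x \<notin> S1"
  shows "card (AF f (S1 \<union> S2) k) = (\<Sum>j=0..k. (card S1 choose j) * card (AF f S2 (k-j)))"
proof -
  define pc where "pc j = (\<lambda>(J,K). J \<union> K) ` ({J. J \<subseteq> S1 \<and> card J = j} \<times> AF f S2 (k-j))" for j
  have fJ: "finite {J. J \<subseteq> S1 \<and> card J = j}" for j
    by (rule finite_subset[of _ "Pow S1"]) (auto simp: f1)
  have eq: "AF f (S1 \<union> S2) k = (\<Union>j\<in>{0..k}. pc j)"
  proof
    show "AF f (S1 \<union> S2) k \<subseteq> (\<Union>j\<in>{0..k}. pc j)"
    proof
      fix K assume "K \<in> AF f (S1 \<union> S2) k"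
      then have K: "K \<subseteq> S1 \<union> S2" "card K = k" "\<forall>x\<in>K. f x \<notin> K" unfolding AF_def by auto
      have fK: "finite K" using K f1 f2 finite_subset by blast
      have Ks: "K = (K \<inter> S1) \<union> (K \<inter> S2)" using K by auto
      have cs: "card K = card (K \<inter> S1) + card (K \<inter> S2)"
        by (subst Ks, rule card_Un_disjoint) (use fK dj in auto)
      have "K \<inter> S2 \<in> AF f S2 (k - card (K \<inter> S1))" using K cs unfolding AF_def by auto
      then have "K \<in> pc (card (K \<inter> S1))" unfolding pc_def using Ks by (auto intro!: image_eqI[where x="(K \<inter> S1, K \<inter> S2)"])
      moreover have "card (K \<inter> S1) \<in> {0..k}" using cs K by auto
      ultimately show "K \<in> (\<Union>j\<in>{0..k}. pc j)" by blast
    qed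
  next
    show "(\<Union>j\<in>{0..k}. pc j) \<subseteq> AF f (S1 \<union> S2) k"
    proof
      fix K assume "K \<in> (\<Union>j\<in>{0..k}. pc j)"
      then obtain j J K2 where j: "j \<le> k" "K = J \<union> K2" "J \<subseteq> S1" "card J = j" "K2 \<in> AF f S2 (k-j)"
        unfolding pc_def by auto
      then have K2: "K2 \<subseteq> S2" "card K2 = k - j" "\<forall>x\<in>K2. f x \<notin> K2" unfolding AF_def by auto
      have "card K = card J + card K2"
        unfolding j(2) by (rule card_Un_disjoint) (use j K2 f1 f2 dj in \<open>auto intro: finite_subset\<close>)
      then have "card K = k" using j K2 by simp
      moreover have "K \<subseteq> S1 \<union> S2" using j K2 by auto
      moreover have "\<forall>x\<in>K. f x \<notin> K"
      proof
        fix x assume x: "x \<in> K"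
        show "f x \<notin> K"
        proof (cases "x \<in> J")
          case True
          then have "f x \<notin> S1 \<union> S2" using h1 j(3) by blast
          then show ?thesis using j(2,3) K2(1) by blast
        next
          case False
          then have "x \<in> K2" using x j(2) by blast
          then have "f x \<notin> K2" "f x \<notin> S1" using K2 h2 by auto
          then show ?thesis using j(2,3) by blast
        qed
      qed
      ultimately show "K \<in> AF f (S1 \<union> S2) k" unfolding AF_def by auto
    qed
  qed
  have cpc: "card (pc j) = (card S1 choose j) * card (AF f S2 (k-j))" for j
  proof -
    have "inj_on (\<lambda>(J,K). J \<union> K) ({J. J \<subseteq> S1 \<and> card J = j} \<times> AF f S2 (k-j))"
    proof (rule inj_onI)
      fix x y assume xy: "x \<in> {J. J \<subseteq> S1 \<and> card J = j} \<times> AF f S2 (k-j)" "y \<in> {J. J \<subseteq> S1 \<and> card J = j} \<times> AF f S2 (k-j)"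
        "(\<lambda>(J,K). J \<union> K) x = (\<lambda>(J,K). J \<union> K) y"
      obtain J K where xJ: "x = (J,K)" by (cases x)
      obtain J' K' where yJ: "y = (J',K')" by (cases y)
      have a: "J \<subseteq> S1" "K \<in> AF f S2 (k-j)" "J' \<subseteq> S1" "K' \<in> AF f S2 (k-j)"
        "J \<union> K = J' \<union> K'" using xy xJ yJ by auto
      then have "K \<subseteq> S2" "K' \<subseteq> S2" unfolding AF_def by auto
      then have e: "(J \<union> K) \<inter> S1 = J" "(J' \<union> K') \<inter> S1 = J'" "(J \<union> K) \<inter> S2 = K" "(J' \<union> K') \<inter> S2 = K'"
        using a dj by auto
      then have "J = J' \<and> K = K'" using a(5) by (metis (no_types))
      then show "x = y" using xJ yJ by simp
    qed
    then have "card (pc j) = card ({J. J \<subseteq> S1 \<and> card J = j} \<times> AF f S2 (k-j))"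
      unfolding pc_def by (rule card_image)
    also have "\<dots> = (card S1 choose j) * card (AF f S2 (k-j))"
      by (simp add: card_cartesian_product n_subsets[OF f1])
    finally show ?thesis .
  qed
  have "card (\<Union>j\<in>{0..k}. pc j) = (\<Sum>j=0..k. card (pc j))"
  proof (rule card_UN_disjoint)
    show "\<forall>j\<in>{0..k}. finite (pc j)" unfolding pc_def using fJ AF_finite[OF f2] by auto
    show "\<forall>i\<in>{0..k}. \<forall>j\<in>{0..k}. i \<noteq> j \<longrightarrow> pc i \<inter> pc j = {}"
    proof (intro ballI impI)
      fix i j :: nat assume "i \<noteq> j"
      show "pc i \<inter> pc j = {}"
      proof (rule ccontr)
        assume "pc i \<inter> pc j \<noteq> {}"
        then obtain J K J' K' where a: "J \<subseteq> S1" "card J = i" "K \<in> AF f S2 (k-i)" "J' \<subseteq> S1" "card J' = j"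
          "K' \<in> AF f S2 (k-j)" "J \<union> K = J' \<union> K'" unfolding pc_def by auto
        then have "K \<subseteq> S2" "K' \<subseteq> S2" unfolding AF_def by auto
        then have e: "(J \<union> K) \<inter> S1 = J" "(J' \<union> K') \<inter> S1 = J'" using a dj by auto
        then have "J = J'" using a(7) by (metis (no_types))
        then show False using a \<open>i \<noteq> j\<close> by simp
      qed
    qed
  qed simp
  then show ?thesis using eq cpc by simp
qed

lemma halves:
  fixes V :: "('b \<Rightarrow> int) set"
  assumes "\<forall>X\<in>V. f X \<in> V \<and> f (f X) = X \<and> (X e = 1 \<or> X e = -1) \<and> f X e = - X e"
  shows "V = {X\<in>V. X e = 1} \<union> f ` {X\<in>V. X e = 1}" "{X\<in>V. X e = 1} \<inter> f ` {X\<in>V. X e = 1} = {}"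
    "\<forall>x\<in>{X\<in>V. X e = 1}. f (f x) = x"
proof -
  show "V = {X\<in>V. X e = 1} \<union> f ` {X\<in>V. X e = 1}"
  proof
    show "V \<subseteq> {X\<in>V. X e = 1} \<union> f ` {X\<in>V. X e = 1}"
    proof
      fix X assume X: "X \<in> V"
      show "X \<in> {X\<in>V. X e = 1} \<union> f ` {X\<in>V. X e = 1}"
      proof (cases "X e = 1")
        case False
        then have "X e = -1" using assms X by blast
        then have "f X \<in> {X\<in>V. X e = 1}" using assms X by auto
        moreover have "X = f (f X)" using assms X by auto
        ultimately show ?thesis by blast
      qed (use X in auto)
    qed
  next
    show "{X\<in>V. X e = 1} \<union> f ` {X\<in>V. X e = 1} \<subseteq> V"
    proof
      fix x assume "x \<in> {X\<in>V. X e = 1} \<union> f ` {X\<in>V. X e = 1}"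
      then consider "x \<in> V" | y where "y \<in> V" "x = f y" by blast
      then show "x \<in> V"
      proof cases
        case 2 then show ?thesis using assms by blast
      qed simp
    qed
  qed
  show "{X\<in>V. X e = 1} \<inter> f ` {X\<in>V. X e = 1} = {}"
  proof (rule equals0I)
    fix x assume x: "x \<in> {X\<in>V. X e = 1} \<inter> f ` {X\<in>V. X e = 1}"
    then obtain y where y: "y \<in> V" "y e = 1" "x = f y" by blast
    then have "x e = -1" using assms by simp
    then show False using x by simp
  qed
  show "\<forall>x\<in>{X\<in>V. X e = 1}. f (f x) = x" using assms by simp
qed

lemma halves_card:
  fixes V :: "('b \<Rightarrow> int) set"
  assumes "finite V" "\<forall>X\<in>V. f X \<in> V \<and> f (f X) = X \<and> (X e = 1 \<or> X e = -1) \<and> f X e = - X e"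
  shows "card V = 2 * card {X\<in>V. X e = 1}"
proof -
  define R where "R = {X\<in>V. X e = 1}"
  have hv: "V = R \<union> f ` R" "R \<inter> f ` R = {}" "\<forall>x\<in>R. f (f x) = x"
    using halves[OF assms(2)] unfolding R_def by blast+
  have inj: "inj_on f R" by (rule inj_onI) (metis hv(3))
  have fR: "finite R" unfolding R_def using assms(1) by simp
  have "card (R \<union> f ` R) = card R + card (f ` R)"
    by (rule card_Un_disjoint) (use fR hv(2) in simp_all)
  then have "card V = card R + card (f ` R)" using hv(1) by simp
  then show ?thesis using card_image[OF inj] unfolding R_def by simp
qed

lemma IE_indexed:
  assumes "finite I" "\<forall>i\<in>I. finite (X i)"
  shows "int (card (\<Union>(X ` I))) = (\<Sum>B | B \<subseteq> I \<and> B \<noteq> {}. (-1)^(card B + 1) * int (card (\<Inter>(X ` B))))"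
proof -
  interpret Incl_Excl finite "int o card"
    proof qed (auto simp: card_Un_disjnt)
  show ?thesis using restricted_indexed[of I X] assms by auto
qed


theorem mainTheorem5:
  fixes t k :: nat and L :: "(nat \<Rightarrow> int) set"
  assumes "t \<ge> 1"
    and "simple_om {1..t} L"
    and "1 \<le> k" and "2 * k \<le> card (topes {1..t} L)"
  shows "let T = topes {1..t} L; n = card T; h = (n - k + 1) div 2;
             P = (\<Union>e\<in>{1..t}. {G. G \<subseteq> pos_halfspace T e \<and> card G = h})
         in int (kappa_ring {1..t} L k) =
            int ((n div 2) choose k) * 2 ^ k +
            (\<Sum>\<G>\<in>{\<G>. \<G> \<subseteq> P \<and> 1 \<le> card \<G> \<and> card \<G> \<le> (n - k) choose h
                        \<and> card (\<Union>\<G>) \<le> n - k}.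
               (-1) ^ card \<G> *
               (\<Sum>j=0..k. int ((card (\<Union>\<G> \<union> sv_neg ` \<Union>\<G>) - card (\<Union>\<G>)) choose j)
                    * int (((n - card (\<Union>\<G> \<union> sv_neg ` \<Union>\<G>)) div 2) choose (k - j))
                    * 2 ^ (k - j)))"
proof -
  define E where "E = {1..t::nat}"
  define T where "T = topes E L"
  define n where "n = card T"
  define h where "h = (n - k + 1) div 2"
  define P where "P = (\<Union>e\<in>E. {G. G \<subseteq> pos_halfspace T e \<and> card G = h})"
  define \<nu> where "\<nu> = (sv_neg :: (nat \<Rightarrow> int) \<Rightarrow> _)"
  have n2: "2 * k \<le> n" "1 \<le> k" using assms unfolding n_def T_def E_def by auto
  have finT: "finite T" using n2 unfolding n_def by (intro card_ge_0_finite) linarith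
  have om: "oriented_matroid_covectors E L" using assms(2) unfolding simple_om_def E_def by blast
  have hT: "\<forall>X\<in>T. \<nu> X \<in> T \<and> \<nu> (\<nu> X) = X \<and> (\<forall>e\<in>E. (X e = 1 \<or> X e = -1) \<and> \<nu> X e = - X e)"
  proof
    fix X assume X: "X \<in> T"
    then have XL: "X \<in> L" and nz: "\<forall>e\<in>E. X e \<noteq> 0" unfolding T_def topes_def by auto
    have sv: "sign_vector E X" using om XL unfolding oriented_matroid_covectors_def by blast
    have "\<nu> X \<in> L" using om XL unfolding oriented_matroid_covectors_def \<nu>_def by blast
    moreover have "\<forall>e\<in>E. \<nu> X e = - X e" unfolding \<nu>_def sv_neg_def by simp
    ultimately have "\<nu> X \<in> T" using nz unfolding T_def topes_def by auto
    moreover have "\<nu> (\<nu> X) = X" unfolding \<nu>_def sv_neg_def by simp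
    moreover have "\<forall>e\<in>E. (X e = 1 \<or> X e = -1)" using sv nz unfolding sign_vector_def by fastforce
    ultimately show "\<nu> X \<in> T \<and> \<nu> (\<nu> X) = X \<and> (\<forall>e\<in>E. (X e = 1 \<or> X e = -1) \<and> \<nu> X e = - X e)"
      unfolding \<nu>_def sv_neg_def by simp
  qed
  have hTe: "\<forall>X\<in>T. \<nu> X \<in> T \<and> \<nu> (\<nu> X) = X \<and> (X e = 1 \<or> X e = -1) \<and> \<nu> X e = - X e" if "e \<in> E" for e
    using hT that by blast
  have oneE: "1 \<in> E" using assms(1) unfolding E_def by simp
  have cardTe: "n = 2 * card (pos_halfspace T e)" if "e \<in> E" for e
    using halves_card[OF finT hTe[OF that]] unfolding n_def pos_halfspace_def by simp
  have cntA: "card (AF \<nu> T k) = (n div 2 choose k) * 2^k"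
  proof -
    note hv = halves[OF hTe[OF oneE]]
    have "card (AF \<nu> T k) = (card {X\<in>T. X 1 = 1} choose k) * 2^k"
      using AF_pairs[OF _ hv(2,3), of k] hv(1) finT by simp
    then show ?thesis using cardTe[OF oneE] unfolding pos_halfspace_def by simp
  qed
  have cntU: "int (card (AF \<nu> (T - U) k)) = (\<Sum>j=0..k. int ((card (U \<union> \<nu> ` U) - card U) choose j)
                    * int (((n - card (U \<union> \<nu> ` U)) div 2) choose (k - j)) * 2 ^ (k - j))"
    if UT: "U \<subseteq> T" for U
  proof -
    define S1 where "S1 = \<nu> ` U - U"
    define S2 where "S2 = T - (U \<union> \<nu> ` U)"
    have nuU: "\<nu> ` U \<subseteq> T" using UT hT by blast
    have finU: "finite U" using UT finT finite_subset by blast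
    have TU: "T - U = S1 \<union> S2" unfolding S1_def S2_def using nuU by blast
    have f1: "finite S1" unfolding S1_def using finU by simp
    have f2: "finite S2" unfolding S2_def using finT by simp
    have dj: "S1 \<inter> S2 = {}" unfolding S1_def S2_def by blast
    have h1: "\<forall>x\<in>S1. \<nu> x \<notin> S1 \<union> S2"
    proof
      fix x assume "x \<in> S1"
      then obtain u where u: "u \<in> U" "x = \<nu> u" unfolding S1_def by blast
      then have "\<nu> x = u" using hT UT by blast
      then show "\<nu> x \<notin> S1 \<union> S2" using u unfolding S1_def S2_def by blast
    qed
    have h2: "\<forall>x\<in>S2. \<nu> x \<notin> S1"
    proof
      fix x assume x: "x \<in> S2"
      show "\<nu> x \<notin> S1"
      proof
        assume "\<nu> x \<in> S1"
        then obtain u where u: "u \<in> U" "\<nu> x = \<nu> u" unfolding S1_def by blast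
        then have "\<nu> (\<nu> x) = \<nu> (\<nu> u)" by simp
        then have "x = u" using hT UT x u(1) unfolding S2_def by (metis DiffD1 subsetD)
        then show False using x u unfolding S2_def by blast
      qed
    qed
    have hS2: "\<forall>X\<in>S2. \<nu> X \<in> S2 \<and> \<nu> (\<nu> X) = X \<and> (X 1 = 1 \<or> X 1 = -1) \<and> \<nu> X 1 = - X 1"
    proof
      fix X assume X: "X \<in> S2"
      then have XT: "X \<in> T" and XU: "X \<notin> U" "X \<notin> \<nu> ` U" unfolding S2_def by auto
      have b: "\<nu> X \<in> T \<and> \<nu> (\<nu> X) = X \<and> (X 1 = 1 \<or> X 1 = -1) \<and> \<nu> X 1 = - X 1"
        using hTe[OF oneE] XT by blast
      have "\<nu> X \<notin> U" using XU(2) b by (metis image_eqI)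
      moreover have "\<nu> X \<notin> \<nu> ` U"
      proof
        assume "\<nu> X \<in> \<nu> ` U"
        then obtain u where u: "u \<in> U" "\<nu> X = \<nu> u" by blast
        then have "\<nu> (\<nu> X) = \<nu> (\<nu> u)" by simp
        then have "X = u" using hT UT b u(1) by (metis subsetD)
        then show False using XU u by blast
      qed
      ultimately show "\<nu> X \<in> S2 \<and> \<nu> (\<nu> X) = X \<and> (X 1 = 1 \<or> X 1 = -1) \<and> \<nu> X 1 = - X 1"
        using b unfolding S2_def by blast
    qed
    define R where "R = {X\<in>S2. X 1 = 1}"
    have hv: "S2 = R \<union> \<nu> ` R" "R \<inter> \<nu> ` R = {}" "\<forall>x\<in>R. \<nu> (\<nu> x) = x"
      using halves[OF hS2] unfolding R_def by blast+
    have fR: "finite R" unfolding R_def using f2 by simp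
    have cS2: "card S2 = 2 * card R" using halves_card[OF f2 hS2] unfolding R_def by simp
    have AF2: "card (AF \<nu> S2 m) = (card R choose m) * 2^m" for m
      using AF_pairs[OF fR hv(2,3), of m] hv(1) by simp
    have W: "U \<union> \<nu> ` U \<subseteq> T" using UT nuU by blast
    have cS2': "card S2 = n - card (U \<union> \<nu> ` U)"
      unfolding S2_def n_def by (rule card_Diff_subset) (use W finT finite_subset in auto)
    have cS1: "card S1 = card (U \<union> \<nu> ` U) - card U"
    proof -
      have "S1 = (U \<union> \<nu> ` U) - U" unfolding S1_def by blast
      then show ?thesis using finU by (simp add: card_Diff_subset)
    qed
    have cR: "card R = (n - card (U \<union> \<nu> ` U)) div 2" using cS2 cS2' by simp
    have "card (AF \<nu> (T - U) k) = (\<Sum>j=0..k. (card S1 choose j) * card (AF \<nu> S2 (k-j)))"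
      unfolding TU by (rule AF_split[OF f1 f2 dj h1 h2])
    also have "\<dots> = (\<Sum>j=0..k. ((card (U \<union> \<nu> ` U) - card U) choose j)
                    * ((((n - card (U \<union> \<nu> ` U)) div 2) choose (k - j)) * 2 ^ (k - j)))"
      using AF2 cS1 cR by simp
    finally show ?thesis by (simp add: mult.assoc)
  qed
  define A where "A = AF \<nu> T k"
  define B where "B G = {K\<in>A. G \<inter> K = {}}" for G
  define Kset where "Kset = {K. tope_committee E T K \<and> card K = k \<and> (\<forall>X\<in>K. \<nu> X \<notin> K)}"
  have kap: "kappa_ring E L k = card Kset"
    unfolding kappa_ring_def Kset_def T_def \<nu>_def by simp
  have PT: "\<forall>G\<in>P. G \<subseteq> T" unfolding P_def pos_halfspace_def by auto
  have finP: "finite P" using PT finT by (meson Pow_iff finite_Pow_iff finite_subset subsetI)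
  have finA: "finite A" unfolding A_def using AF_finite[OF finT] .
  have goode: "(k < 2 * card {X\<in>K. X e = 1}) \<longleftrightarrow> \<not> (\<exists>G. G \<subseteq> pos_halfspace T e \<and> card G = h \<and> G \<inter> K = {})"
    if KA: "K \<in> A" and e: "e \<in> E" for K e
  proof -
    define Te where "Te = pos_halfspace T e"
    have KT: "K \<subseteq> T" using KA unfolding A_def AF_def by auto
    have nq: "n = 2 * card Te" using cardTe[OF e] unfolding Te_def .
    have eqp: "{X\<in>K. X e = 1} = Te \<inter> K" using KT unfolding Te_def pos_halfspace_def by auto
    have finTe: "finite Te" unfolding Te_def pos_halfspace_def using finT by simp
    have pq: "card (Te \<inter> K) \<le> card Te" using finTe by (simp add: card_mono)
    have cd: "card (Te - K) = card Te - card (Te \<inter> K)"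
      using finTe by (simp add: card_Diff_subset_Int)
    have ex: "(\<exists>G. G \<subseteq> Te \<and> card G = h \<and> G \<inter> K = {}) \<longleftrightarrow> h \<le> card (Te - K)"
    proof
      assume "\<exists>G. G \<subseteq> Te \<and> card G = h \<and> G \<inter> K = {}"
      then obtain G where G: "G \<subseteq> Te" "card G = h" "G \<inter> K = {}" by blast
      then have "G \<subseteq> Te - K" by blast
      then show "h \<le> card (Te - K)" using G finTe by (metis card_mono finite_Diff)
    next
      assume "h \<le> card (Te - K)"
      then obtain G where "G \<subseteq> Te - K" "card G = h" using obtain_subset_with_card_n by metis
      then show "\<exists>G. G \<subseteq> Te \<and> card G = h \<and> G \<inter> K = {}" by blast
    qed
    have arith: "(k < 2 * p) \<longleftrightarrow> \<not> (h \<le> q - p)" if "n = 2 * q" "p \<le> q" for p q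
      using that n2 unfolding h_def by presburger
    show ?thesis using ex arith[OF nq pq] eqp cd unfolding Te_def by simp
  qed
  have good: "(\<forall>e\<in>E. k < 2 * card {X\<in>K. X e = 1}) \<longleftrightarrow> (\<forall>G\<in>P. G \<inter> K \<noteq> {})" if KA: "K \<in> A" for K
    using goode[OF KA] unfolding P_def by blast
  have Kset_eq: "Kset = A - (\<Union>G\<in>P. B G)"
  proof
    show "Kset \<subseteq> A - (\<Union>G\<in>P. B G)"
    proof
      fix K assume "K \<in> Kset"
      then have K: "K \<subseteq> T" "card K = k" "\<forall>X\<in>K. \<nu> X \<notin> K" "\<forall>e\<in>E. k < 2 * card {X\<in>K. X e = 1}"
        unfolding Kset_def tope_committee_def by auto
      then have KA: "K \<in> A" unfolding A_def AF_def by auto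
      then show "K \<in> A - (\<Union>G\<in>P. B G)" using good[OF KA] K(4) unfolding B_def by auto
    qed
  next
    show "A - (\<Union>G\<in>P. B G) \<subseteq> Kset"
    proof
      fix K assume K: "K \<in> A - (\<Union>G\<in>P. B G)"
      then have KA: "K \<in> A" and KB: "\<forall>G\<in>P. G \<inter> K \<noteq> {}" unfolding B_def by auto
      then have K1: "K \<subseteq> T" "card K = k" "\<forall>X\<in>K. \<nu> X \<notin> K" unfolding A_def AF_def by auto
      have "K \<noteq> T" using K1(2) n2 unfolding n_def by auto
      then have "K \<subset> T" using K1 by blast
      then show "K \<in> Kset" using good[OF KA] KB K1 unfolding Kset_def tope_committee_def by auto
    qed
  qed
  have BA: "(\<Union>G\<in>P. B G) \<subseteq> A" unfolding B_def by auto
  have c1: "int (card Kset) = int (card A) - int (card (\<Union>G\<in>P. B G))"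
    unfolding Kset_eq using BA finA by (simp add: card_Diff_subset finite_subset of_nat_diff card_mono)
  have IE: "int (card (\<Union>G\<in>P. B G)) = (\<Sum>\<G> | \<G> \<subseteq> P \<and> \<G> \<noteq> {}. (-1)^(card \<G> + 1) * int (card (\<Inter>(B ` \<G>))))"
    by (rule IE_indexed) (use finP finA in \<open>auto simp: B_def\<close>)
  have IB: "\<Inter>(B ` \<G>) = AF \<nu> (T - \<Union>\<G>) k" if "\<G> \<noteq> {}" for \<G>
    using that unfolding B_def A_def AF_def by blast
  define Big where "Big = {\<G>. \<G> \<subseteq> P \<and> \<G> \<noteq> {}}"
  define c where "c \<G> = int (card (AF \<nu> (T - \<Union>\<G>) k))" for \<G>
  have c2: "int (card Kset) = int (card A) + (\<Sum>\<G>\<in>Big. (-1)^(card \<G>) * c \<G>)"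
  proof -
    have "(\<Sum>\<G>\<in>Big. (-1)^(card \<G> + 1) * int (card (\<Inter>(B ` \<G>)))) = (\<Sum>\<G>\<in>Big. - ((-1)^(card \<G>) * c \<G>))"
      by (rule sum.cong) (auto simp: Big_def IB c_def)
    then show ?thesis using c1 IE unfolding Big_def by (simp add: sum_negf)
  qed
  define Filt where "Filt = {\<G>. \<G> \<subseteq> P \<and> 1 \<le> card \<G> \<and> card \<G> \<le> (n - k) choose h
                        \<and> card (\<Union>\<G>) \<le> n - k}"
  have finBig: "finite Big" unfolding Big_def using finP by (simp add: finite_subset[of _ "Pow P"] subset_iff)
  have sub: "Filt \<subseteq> Big" unfolding Filt_def Big_def by auto
  have zero: "(-1)^(card \<G>) * c \<G> = 0" if G: "\<G> \<in> Big - Filt" for \<G>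
  proof -
    have GP: "\<G> \<subseteq> P" "\<G> \<noteq> {}" using G unfolding Big_def by auto
    have finG: "finite \<G>" using GP finP finite_subset by blast
    have UT: "\<Union>\<G> \<subseteq> T" using GP PT by blast
    have finU: "finite (\<Union>\<G>)" using UT finT finite_subset by blast
    have big: "\<not> card (\<Union>\<G>) \<le> n - k"
    proof
      assume le: "card (\<Union>\<G>) \<le> n - k"
      have "1 \<le> card \<G>" using GP finG by (simp add: Suc_leI card_gt_0_iff)
      moreover have "card \<G> \<le> (n - k) choose h"
      proof -
        have hP: "\<forall>G\<in>P. card G = h" unfolding P_def by auto
        have s: "\<G> \<subseteq> {G. G \<subseteq> \<Union>\<G> \<and> card G = h}" using GP hP by blast
        have "card \<G> \<le> card {G. G \<subseteq> \<Union>\<G> \<and> card G = h}"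
          by (rule card_mono[OF _ s]) (rule finite_subset[of _ "Pow (\<Union>\<G>)"], auto simp: finU)
        also have "\<dots> = card (\<Union>\<G>) choose h" by (rule n_subsets[OF finU])
        also have "\<dots> \<le> (n - k) choose h" by (rule binomial_right_mono[OF le])
        finally show ?thesis .
      qed
      ultimately have "\<G> \<in> Filt" using GP le unfolding Filt_def by blast
      then show False using G by blast
    qed
    have "AF \<nu> (T - \<Union>\<G>) k = {}"
    proof (rule equals0I)
      fix K assume "K \<in> AF \<nu> (T - \<Union>\<G>) k"
      then have K: "K \<subseteq> T - \<Union>\<G>" "card K = k" unfolding AF_def by auto
      have "card K \<le> card (T - \<Union>\<G>)" using K(1) finT by (intro card_mono) auto
      also have "\<dots> = n - card (\<Union>\<G>)" unfolding n_def using UT finU by (simp add: card_Diff_subset)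
      finally show False using K big n2 by linarith
    qed
    then show ?thesis unfolding c_def by simp
  qed
  have s1: "(\<Sum>\<G>\<in>Big. (-1)^(card \<G>) * c \<G>) = (\<Sum>\<G>\<in>Filt. (-1)^(card \<G>) * c \<G>)"
    by (rule sum.mono_neutral_right[OF finBig sub]) (use zero in blast)
  have s2: "(\<Sum>\<G>\<in>Filt. (-1)^(card \<G>) * c \<G>) =
     (\<Sum>\<G>\<in>Filt. (-1) ^ card \<G> *
               (\<Sum>j=0..k. int ((card (\<Union>\<G> \<union> \<nu> ` \<Union>\<G>) - card (\<Union>\<G>)) choose j)
                    * int (((n - card (\<Union>\<G> \<union> \<nu> ` \<Union>\<G>)) div 2) choose (k - j))
                    * 2 ^ (k - j)))"
  proof (rule sum.cong[OF refl])
    fix \<G> assume "\<G> \<in> Filt"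
    then have "\<Union>\<G> \<subseteq> T" unfolding Filt_def using PT by blast
    then show "(-1)^(card \<G>) * c \<G> = (-1) ^ card \<G> *
               (\<Sum>j=0..k. int ((card (\<Union>\<G> \<union> \<nu> ` \<Union>\<G>) - card (\<Union>\<G>)) choose j)
                    * int (((n - card (\<Union>\<G> \<union> \<nu> ` \<Union>\<G>)) div 2) choose (k - j))
                    * 2 ^ (k - j))" unfolding c_def using cntU by simp
  qed
  have fin: "int (kappa_ring E L k) = int ((n div 2) choose k) * 2 ^ k +
     (\<Sum>\<G>\<in>Filt. (-1) ^ card \<G> *
               (\<Sum>j=0..k. int ((card (\<Union>\<G> \<union> \<nu> ` \<Union>\<G>) - card (\<Union>\<G>)) choose j)
                    * int (((n - card (\<Union>\<G> \<union> \<nu> ` \<Union>\<G>)) div 2) choose (k - j))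
                    * 2 ^ (k - j)))"
    using kap c2 s1 s2 cntA unfolding A_def by simp
  show ?thesis using fin unfolding Let_def Filt_def P_def h_def n_def T_def E_def \<nu>_def .
qed

end
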